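(* For every $n\in\mathbb N$: (1) $\varphi(L_n)$ is a finite semilattice; (2) $\varphi(L_n\sqcup C_2)$ is a commutative Boolean semigroup isomorphic to the reduced product $\varphi(L_{n+1})\times_{\varphi(L_n)}\varphi(C_2)$.
   Context: An upfamily on $X$ is a family of nonempty subsets closed under supersets; $\varphi(X)$ is the set of filters on $X$ (upfamilies closed under finite intersections), with operation $\mathcal A*\mathcal B=\big\langle \bigcup_{a\in A} a*B_a : A\in\mathcal A,\ \{B_a\}_{a\in A}\subset\mathcal B\big\rangle$, where $\langle\mathcal C\rangle=\{A\subset X:\exists C\in\mathcal C,\ C\subset A\}$. $C_2=\{1,-1\}$ under multiplication; $L_n=\{0,\dots,n-1\}$ with operation $\min$, so $L_n\subset L_{n+1}$, and $\varphi(L_n)$ is identified with the set of filters on $L_{n+1}$ containing $L_n$, which is an ideal of $\varphi(L_{n+1})$. For semigroups $(X,* )$, $(Y,\star)$, the disjoint ordered union $X\sqcup Y$ is the disjoint union with operation $x\circ y=x*y$ for $x,y\in X$; $x\circ y=x$ if $x\in X,y\in Y$; $x\circ y=y$ if $x\in Y,y\in X$; $x\circ y=x\star y$ for $x,y\in Y$. A semigroup is Boolean if $x^3=x$ for all $x$. For semigroups $X,Y$ and an ideal $I$ of $X$ (nonempty $I$ with $XI\cup IX\subset I$), the reduced product $X\times_I Y$ is the set $I\cup((X\setminus I)\times Y)$ with operation $a*b=p_X(a)p_X(b)$ if $p_X(a)p_X(b)\in I$ and $a*b=(p_X(a)p_X(b),\,p_Y(a)p_Y(b))$ otherwise, where $p_X:X\times_IY\to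 X$ is the natural projection (identity on $I$) and $p_Y:(X\setminus I)\times Y\to Y$ is the projection. *)

theory Defs
  imports Main
begin

definition semigroup_on :: "'a set \<Rightarrow> ('a \<Rightarrow> 'a \<Rightarrow> 'a) \<Rightarrow> bool" where
  "semigroup_on S m \<longleftrightarrow> (\<forall>x\<in>S. \<forall>y\<in>S. m x y \<in> S) \<and>
     (\<forall>x\<in>S. \<forall>y\<in>S. \<forall>z\<in>S. m (m x y) z = m x (m y z))"

definition commutative_on :: "'a set \<Rightarrow> ('a \<Rightarrow> 'a \<Rightarrow> 'a) \<Rightarrow> bool" where
  "commutative_on S m \<longleftrightarrow> (\<forall>x\<in>S. \<forall>y\<in>S. m x y = m y x)"

definition semilattice_on :: "'a set \<Rightarrow> ('a \<Rightarrow> 'a \<Rightarrow> 'a) \<Rightarrow> bool" where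
  "semilattice_on S m \<longleftrightarrow> semigroup_on S m \<and> commutative_on S m \<and> (\<forall>x\<in>S. m x x = x)"

definition boolean_on :: "'a set \<Rightarrow> ('a \<Rightarrow> 'a \<Rightarrow> 'a) \<Rightarrow> bool" where
  "boolean_on S m \<longleftrightarrow> (\<forall>x\<in>S. m x (m x x) = x)"

definition semigroup_iso :: "'a set \<Rightarrow> ('a \<Rightarrow> 'a \<Rightarrow> 'a) \<Rightarrow> 'b set \<Rightarrow> ('b \<Rightarrow> 'b \<Rightarrow> 'b) \<Rightarrow> bool" where
  "semigroup_iso S m T m' \<longleftrightarrow>
     (\<exists>h. bij_betw h S T \<and> (\<forall>x\<in>S. \<forall>y\<in>S. h (m x y) = m' (h x) (h y)))"

definition filters :: "'a set \<Rightarrow> 'a set set set" where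
  "filters X = {F. F \<noteq> {} \<and> (\<forall>A\<in>F. A \<noteq> {} \<and> A \<subseteq> X) \<and>
      (\<forall>A\<in>F. \<forall>B. A \<subseteq> B \<and> B \<subseteq> X \<longrightarrow> B \<in> F) \<and>
      (\<forall>A\<in>F. \<forall>B\<in>F. A \<inter> B \<in> F)}"

definition fmul :: "'a set \<Rightarrow> ('a \<Rightarrow> 'a \<Rightarrow> 'a) \<Rightarrow> 'a set set \<Rightarrow> 'a set set \<Rightarrow> 'a set set" where
  "fmul X f \<A> \<B> = {S. S \<subseteq> X \<and> (\<exists>A\<in>\<A>. \<exists>Bf. (\<forall>a\<in>A. Bf a \<in> \<B>) \<and>
        (\<Union>a\<in>A. (\<lambda>b. f a b) ` Bf a) \<subseteq> S)}"

text \<open>L_n = {0,...,n-1} with min; C_2 = {1,-1} with multiplication.\<close>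
definition Ln :: "nat \<Rightarrow> nat set" where "Ln n = {0..<n}"
definition C2 :: "int set" where "C2 = {1, -1}"

definition dou_carrier :: "'a set \<Rightarrow> 'b set \<Rightarrow> ('a + 'b) set" where
  "dou_carrier X Y = Inl ` X \<union> Inr ` Y"

fun dou_mul :: "('a \<Rightarrow> 'a \<Rightarrow> 'a) \<Rightarrow> ('b \<Rightarrow> 'b \<Rightarrow> 'b) \<Rightarrow> ('a + 'b) \<Rightarrow> ('a + 'b) \<Rightarrow> ('a + 'b)" where
  "dou_mul f g (Inl x) (Inl y) = Inl (f x y)"
| "dou_mul f g (Inl x) (Inr y) = Inl x"
| "dou_mul f g (Inr x) (Inl y) = Inl y"
| "dou_mul f g (Inr x) (Inr y) = Inr (g x y)"

text \<open>Reduced product X \<times>_I Y: elements of I are tagged Inl, pairs in (X - I) \<times> Y tagged Inr.\<close>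
definition rp_carrier :: "'a set \<Rightarrow> 'a set \<Rightarrow> 'b set \<Rightarrow> ('a + ('a \<times> 'b)) set" where
  "rp_carrier X I Y = Inl ` I \<union> Inr ` ((X - I) \<times> Y)"

fun rp_pX :: "('a + ('a \<times> 'b)) \<Rightarrow> 'a" where
  "rp_pX (Inl a) = a"
| "rp_pX (Inr p) = fst p"

definition rp_mul :: "'a set \<Rightarrow> ('a \<Rightarrow> 'a \<Rightarrow> 'a) \<Rightarrow> ('b \<Rightarrow> 'b \<Rightarrow> 'b)
     \<Rightarrow> ('a + ('a \<times> 'b)) \<Rightarrow> ('a + ('a \<times> 'b)) \<Rightarrow> ('a + ('a \<times> 'b))" where
  "rp_mul I f g a b =
     (let c = f (rp_pX a) (rp_pX b) in
      if c \<in> I then Inl c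
      else (case (a, b) of (Inr p, Inr q) \<Rightarrow> Inr (c, g (snd p) (snd q)) | _ \<Rightarrow> Inl c))"

end

theory Submission
  imports Defs
begin


definition pf :: "'a set \<Rightarrow> 'a set \<Rightarrow> 'a set set" where "pf X B = {A. B \<subseteq> A \<and> A \<subseteq> X}"
definition setmul :: "('a \<Rightarrow> 'a \<Rightarrow> 'a) \<Rightarrow> 'a set \<Rightarrow> 'a set \<Rightarrow> 'a set" where
  "setmul f A B = (\<Union>a\<in>A. f a ` B)"
definition Pn :: "'a set \<Rightarrow> 'a set set" where "Pn X = {B. B \<noteq> {} \<and> B \<subseteq> X}"

lemma pf_in_filters: "B \<noteq> {} \<Longrightarrow> B \<subseteq> X \<Longrightarrow> pf X B \<in> filters X"
  unfolding filters_def pf_def by auto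

lemma Inter_pf: "B \<subseteq> X \<Longrightarrow> \<Inter>(pf X B) = B"
  unfolding pf_def by auto

lemma pf_inj: "B \<subseteq> X \<Longrightarrow> C \<subseteq> X \<Longrightarrow> pf X B = pf X C \<Longrightarrow> B = C"
  by (metis Inter_pf)

lemma finite_Inter_mem:
  assumes "finite F" "F \<noteq> {}" "\<forall>A\<in>F. \<forall>B\<in>F. A \<inter> B \<in> F"
  shows "\<Inter>F \<in> F"
proof -
  have "\<Inter>G \<in> F" if "finite G" "G \<noteq> {}" "G \<subseteq> F" for G
    using that by (induction G rule: finite_ne_induct) (use assms(3) in auto)
  then show ?thesis using assms by blast
qed

lemma filters_pf:
  assumes fin: "finite X" and FF: "F \<in> filters X"
  shows "\<Inter>F \<noteq> {} \<and> \<Inter>F \<subseteq> X \<and> F = pf X (\<Inter>F)"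
proof -
  have Fd: "F \<noteq> {} \<and> (\<forall>A\<in>F. A \<noteq> {} \<and> A \<subseteq> X) \<and> (\<forall>A\<in>F. \<forall>B. A \<subseteq> B \<and> B \<subseteq> X \<longrightarrow> B \<in> F) \<and>
     (\<forall>A\<in>F. \<forall>B\<in>F. A \<inter> B \<in> F)" using FF unfolding filters_def by (rule CollectD)
  have F1: "F \<noteq> {}" using Fd by (rule conjunct1)
  have F2: "\<forall>A\<in>F. A \<noteq> {} \<and> A \<subseteq> X" using Fd[THEN conjunct2] by (rule conjunct1)
  have F3: "\<forall>A\<in>F. \<forall>B. A \<subseteq> B \<and> B \<subseteq> X \<longrightarrow> B \<in> F" using Fd[THEN conjunct2, THEN conjunct2] by (rule conjunct1)
  have F4: "\<forall>A\<in>F. \<forall>B\<in>F. A \<inter> B \<in> F" using Fd[THEN conjunct2, THEN conjunct2] by (rule conjunct2)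
  have "F \<subseteq> Pow X"
  proof
    fix A assume "A \<in> F"
    then have "A \<subseteq> X" using F2 by simp
    then show "A \<in> Pow X" by simp
  qed
  hence "finite F" using fin by (simp add: finite_subset)
  hence m: "\<Inter>F \<in> F" by (rule finite_Inter_mem[OF _ F1 F4])
  have m2: "\<Inter>F \<noteq> {} \<and> \<Inter>F \<subseteq> X" using F2 m by simp
  have e: "F = pf X (\<Inter>F)"
  proof
    show "F \<subseteq> pf X (\<Inter>F)"
    proof
      fix A assume A: "A \<in> F"
      then have "\<Inter>F \<subseteq> A" by (rule Inter_lower)
      moreover have "A \<subseteq> X" using F2 A by simp
      ultimately show "A \<in> pf X (\<Inter>F)" unfolding pf_def by simp
    qed
    show "pf X (\<Inter>F) \<subseteq> F"
    proof
      fix A assume "A \<in> pf X (\<Inter>F)"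
      then have "\<Inter>F \<subseteq> A \<and> A \<subseteq> X" unfolding pf_def by simp
      then show "A \<in> F" using F3 m by simp
    qed
  qed
  show ?thesis
  proof (intro conjI)
    show "\<Inter>F \<noteq> {}" using m2 by (rule conjunct1)
    show "\<Inter>F \<subseteq> X" using m2 by (rule conjunct2)
    show "F = pf X (\<Inter>F)" by (rule e)
  qed
qed

lemma filters_obtain:
  assumes "finite X" "F \<in> filters X"
  obtains B where "B \<noteq> {}" "B \<subseteq> X" "F = pf X B"
proof -
  have h: "\<Inter>F \<noteq> {} \<and> \<Inter>F \<subseteq> X \<and> F = pf X (\<Inter>F)" by (rule filters_pf[OF assms])
  show ?thesis by (rule that[of "\<Inter>F", OF h[THEN conjunct1] h[THEN conjunct2, THEN conjunct1] h[THEN conjunct2, THEN conjunct2]])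
qed

lemma setmul_sub: "\<forall>x\<in>X. \<forall>y\<in>X. f x y \<in> X \<Longrightarrow> B \<subseteq> X \<Longrightarrow> C \<subseteq> X \<Longrightarrow> setmul f B C \<subseteq> X"
  unfolding setmul_def by blast

lemma setmul_ne: "B \<noteq> {} \<Longrightarrow> C \<noteq> {} \<Longrightarrow> setmul f B C \<noteq> {}"
  unfolding setmul_def by blast

lemma fmul_pf:
  assumes BX: "B \<subseteq> X" and CX: "C \<subseteq> X"
  shows "fmul X f (pf X B) (pf X C) = pf X (setmul f B C)"
proof (rule set_eqI)
  fix S
  show "S \<in> fmul X f (pf X B) (pf X C) \<longleftrightarrow> S \<in> pf X (setmul f B C)"
  proof
    assume "S \<in> fmul X f (pf X B) (pf X C)"
    then have h: "S \<subseteq> X \<and> (\<exists>A\<in>pf X B. \<exists>Bf. (\<forall>a\<in>A. Bf a \<in> pf X C) \<and>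
        (\<Union>a\<in>A. (\<lambda>b. f a b) ` Bf a) \<subseteq> S)" unfolding fmul_def by (rule CollectD)
    then obtain A Bf where A: "A \<in> pf X B" and Bf: "\<forall>a\<in>A. Bf a \<in> pf X C"
      and U: "(\<Union>a\<in>A. (\<lambda>b. f a b) ` Bf a) \<subseteq> S" by blast
    have "setmul f B C \<subseteq> S"
    proof
      fix x assume "x \<in> setmul f B C"
      then obtain a c where ac: "a \<in> B" "c \<in> C" "x = f a c" unfolding setmul_def by blast
      have aA: "a \<in> A" using A ac(1) unfolding pf_def by blast
      have "C \<subseteq> Bf a" using Bf aA unfolding pf_def by blast
      hence "c \<in> Bf a" using ac(2) by blast
      hence "x \<in> (\<Union>a\<in>A. (\<lambda>b. f a b) ` Bf a)" using aA ac(3) by blast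
      then show "x \<in> S" using U by blast
    qed
    then show "S \<in> pf X (setmul f B C)" using h unfolding pf_def by simp
  next
    assume "S \<in> pf X (setmul f B C)"
    hence S1: "S \<subseteq> X" and S2: "(\<Union>a\<in>B. (\<lambda>b. f a b) ` C) \<subseteq> S" unfolding pf_def setmul_def by simp_all
    have B1: "B \<in> pf X B" using BX unfolding pf_def by simp
    have C1: "\<forall>a\<in>B. (\<lambda>_. C) a \<in> pf X C" using CX unfolding pf_def by simp
    have "\<exists>A\<in>pf X B. \<exists>Bf. (\<forall>a\<in>A. Bf a \<in> pf X C) \<and> (\<Union>a\<in>A. (\<lambda>b. f a b) ` Bf a) \<subseteq> S"
      by (rule bexI[OF exI[of _ "\<lambda>_. C"] B1]) (use C1 S2 in simp)
    then show "S \<in> fmul X f (pf X B) (pf X C)" using S1 unfolding fmul_def by simp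
  qed
qed

lemma setmul_alt: "setmul f A B = {f a b |a b. a \<in> A \<and> b \<in> B}"
  unfolding setmul_def by auto
lemma setmul_assoc: assumes "\<forall>x y z. f (f x y) z = f x (f y z)" shows
   "setmul f (setmul f A B) C = setmul f A (setmul f B C)"
proof -
  have "setmul f (setmul f A B) C = {f (f a b) c |a b c. a \<in> A \<and> b \<in> B \<and> c \<in> C}"
    unfolding setmul_alt by auto
  also have "\<dots> = {f a (f b c) |a b c. a \<in> A \<and> b \<in> B \<and> c \<in> C}" using assms by simp
  also have "\<dots> = setmul f A (setmul f B C)" unfolding setmul_alt by auto
  finally show ?thesis .
qed
lemma setmul_comm: assumes "\<forall>x y. f x y = f y x" shows "setmul f A B = setmul f B A"
proof -
  have "setmul f A B = {f b a |a b. a \<in> A \<and> b \<in> B}" unfolding setmul_alt using assms by metis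
  also have "\<dots> = setmul f B A" unfolding setmul_alt by auto
  finally show ?thesis .
qed

lemma gen_sg:
  assumes fin: "finite X" and cl: "\<forall>x\<in>X. \<forall>y\<in>X. f x y \<in> X" and as: "\<forall>x y z. f (f x y) z = f x (f y z)"
  shows "semigroup_on (filters X) (fmul X f)"
  unfolding semigroup_on_def
proof (intro conjI ballI)
  fix F G assume F: "F \<in> filters X" and G: "G \<in> filters X"
  obtain B where B: "B \<noteq> {}" "B \<subseteq> X" "F = pf X B" using filters_obtain[OF fin F] .
  obtain C where C: "C \<noteq> {}" "C \<subseteq> X" "G = pf X C" using filters_obtain[OF fin G] .
  have "fmul X f F G = pf X (setmul f B C)" unfolding B(3) C(3) by (rule fmul_pf[OF B(2) C(2)])
  moreover have "pf X (setmul f B C) \<in> filters X"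
    by (rule pf_in_filters[OF setmul_ne[OF B(1) C(1)] setmul_sub[OF cl B(2) C(2)]])
  ultimately show "fmul X f F G \<in> filters X" by simp
next
  fix F G H assume F: "F \<in> filters X" and G: "G \<in> filters X" and H: "H \<in> filters X"
  obtain B where B: "B \<noteq> {}" "B \<subseteq> X" "F = pf X B" using filters_obtain[OF fin F] .
  obtain C where C: "C \<noteq> {}" "C \<subseteq> X" "G = pf X C" using filters_obtain[OF fin G] .
  obtain D where D: "D \<noteq> {}" "D \<subseteq> X" "H = pf X D" using filters_obtain[OF fin H] .
  have BC: "setmul f B C \<subseteq> X" by (rule setmul_sub[OF cl B(2) C(2)])
  have CD: "setmul f C D \<subseteq> X" by (rule setmul_sub[OF cl C(2) D(2)])
  have "fmul X f (fmul X f F G) H = fmul X f (pf X (setmul f B C)) (pf X D)"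
    unfolding B(3) C(3) D(3) fmul_pf[OF B(2) C(2)] ..
  also have "\<dots> = pf X (setmul f (setmul f B C) D)" by (rule fmul_pf[OF BC D(2)])
  also have "\<dots> = pf X (setmul f B (setmul f C D))" unfolding setmul_assoc[OF as] ..
  also have "\<dots> = fmul X f (pf X B) (pf X (setmul f C D))" by (rule fmul_pf[OF B(2) CD, symmetric])
  also have "\<dots> = fmul X f F (fmul X f G H)" unfolding B(3) C(3) D(3) fmul_pf[OF C(2) D(2)] ..
  finally show "fmul X f (fmul X f F G) H = fmul X f F (fmul X f G H)" .
qed

lemma gen_comm:
  assumes "finite X" "\<forall>x y. f x y = f y x"
  shows "commutative_on (filters X) (fmul X f)"
  unfolding commutative_on_def
proof (intro ballI)
  fix F G assume "F \<in> filters X" "G \<in> filters X"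
  obtain B where "B \<subseteq> X" "F = pf X B" using filters_obtain[OF assms(1) \<open>F \<in> filters X\<close>] by blast
  moreover obtain C where "C \<subseteq> X" "G = pf X C" using filters_obtain[OF assms(1) \<open>G \<in> filters X\<close>] by blast
  ultimately show "fmul X f F G = fmul X f G F" using fmul_pf[of _ X _ f] setmul_comm[OF assms(2)] by simp
qed

lemma gen_cube:
  assumes "finite X" "\<forall>x\<in>X. \<forall>y\<in>X. f x y \<in> X"
    "\<forall>x\<in>X. \<forall>y\<in>X. \<forall>z\<in>X. f x (f y z) \<in> {x,y,z}" "\<forall>x\<in>X. f x (f x x) = x"
  shows "boolean_on (filters X) (fmul X f)"
  unfolding boolean_on_def
proof (intro ballI)
  fix F assume "F \<in> filters X"
  obtain B where B: "B \<subseteq> X" "F = pf X B" using filters_obtain[OF assms(1) \<open>F \<in> filters X\<close>] by blast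
  have "setmul f B (setmul f B B) = B"
  proof
    show "setmul f B (setmul f B B) \<subseteq> B"
    proof
      fix x assume "x \<in> setmul f B (setmul f B B)"
      then obtain a b c where abc: "a \<in> B" "b \<in> B" "c \<in> B" "x = f a (f b c)" unfolding setmul_alt by blast
      have "a \<in> X" "b \<in> X" "c \<in> X" using abc B(1) by auto
      hence "f a (f b c) \<in> {a,b,c}" using assms(3) by simp
      then show "x \<in> B" using abc by auto
    qed
    show "B \<subseteq> setmul f B (setmul f B B)"
    proof
      fix x assume "x \<in> B"
      hence "x = f x (f x x)" using assms(4) B(1) by auto
      then show "x \<in> setmul f B (setmul f B B)" unfolding setmul_alt using \<open>x \<in> B\<close> by blast
    qed
  qed
  then show "fmul X f F (fmul X f F F) = F" using B fmul_pf[of _ X _ f] setmul_sub[OF assms(2)] by simp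
qed

lemma gen_idem:
  assumes "finite X" "\<forall>x y. f x y \<in> {x,y}" "\<forall>x. f x x = x"
  shows "\<forall>F\<in>filters X. fmul X f F F = F"
proof
  fix F assume "F \<in> filters X"
  obtain B where B: "B \<subseteq> X" "F = pf X B" using filters_obtain[OF assms(1) \<open>F \<in> filters X\<close>] by blast
  have "setmul f B B = B"
  proof
    show "setmul f B B \<subseteq> B"
    proof
      fix x assume "x \<in> setmul f B B"
      then obtain a b where ab: "a \<in> B" "b \<in> B" "x = f a b" unfolding setmul_alt by blast
      have "f a b \<in> {a,b}" using assms(2) by simp
      then show "x \<in> B" using ab by auto
    qed
    show "B \<subseteq> setmul f B B" unfolding setmul_alt using assms(3) by (metis (mono_tags, lifting) mem_Collect_eq subsetI)
  qed
  then show "fmul X f F F = F" using B fmul_pf[of B X B f] by simp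
qed

lemma gen_finite: "finite X \<Longrightarrow> finite (filters X)"
proof -
  assume "finite X"
  hence "filters X \<subseteq> pf X ` Pow X" using filters_pf by blast
  thus ?thesis using \<open>finite X\<close> finite_subset by blast
qed



abbreviation "X2 n \<equiv> dou_carrier (Ln n) C2"
abbreviation "f2 \<equiv> dou_mul (min::nat\<Rightarrow>nat\<Rightarrow>nat) ((*)::int\<Rightarrow>int\<Rightarrow>int)"

lemma X2_finite: "finite (X2 n)" unfolding dou_carrier_def Ln_def C2_def by auto

lemma f2_assoc: "\<forall>x y z. f2 (f2 x y) z = f2 x (f2 y z)"
proof (intro allI)
  fix x y z :: "nat + int"
  show "f2 (f2 x y) z = f2 x (f2 y z)"
    by (cases x; cases y; cases z) (auto simp: min.assoc mult.assoc)
qed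

lemma f2_comm: "\<forall>x y. f2 x y = f2 y x"
proof (intro allI)
  fix x y :: "nat + int"
  show "f2 x y = f2 y x" by (cases x; cases y) (auto simp: min.commute mult.commute)
qed

lemma f2_closed1: "x \<in> X2 n \<Longrightarrow> y \<in> X2 n \<Longrightarrow> f2 x y \<in> X2 n"
proof (cases x; cases y)
  fix p q assume "x \<in> X2 n" "y \<in> X2 n" "x = Inr p" "y = Inr q"
  then have "p \<in> {1,-1}" "q \<in> {1,-1}" unfolding dou_carrier_def C2_def by auto
  then have "p * q \<in> C2" unfolding C2_def by auto
  then show ?thesis using \<open>x = Inr p\<close> \<open>y = Inr q\<close> unfolding dou_carrier_def by auto
next
  fix p q assume "x \<in> X2 n" "y \<in> X2 n" "x = Inl p" "y = Inl q"
  then have "p \<in> Ln n" "q \<in> Ln n" unfolding dou_carrier_def by auto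
  then have "min p q \<in> Ln n" by (simp add: min_def)
  then show ?thesis using \<open>x = Inl p\<close> \<open>y = Inl q\<close> unfolding dou_carrier_def by auto
qed auto

lemma f2_closed: "\<forall>x\<in>X2 n. \<forall>y\<in>X2 n. f2 x y \<in> X2 n"
  using f2_closed1 by blast

lemma pm3: "(p::int) \<in> {1,-1} \<Longrightarrow> q \<in> {1,-1} \<Longrightarrow> r \<in> {1,-1} \<Longrightarrow> p * (q * r) \<in> {p,q,r}"
  by auto

lemma min3: "min (a::nat) (min b c) \<in> {a,b,c}" by (simp add: min_def)

lemma f2_tern1: "x \<in> X2 n \<Longrightarrow> y \<in> X2 n \<Longrightarrow> z \<in> X2 n \<Longrightarrow> f2 x (f2 y z) \<in> {x,y,z}"
proof (cases x; cases y; cases z)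
  fix p q r assume "x \<in> X2 n" "y \<in> X2 n" "z \<in> X2 n" "x = Inr p" "y = Inr q" "z = Inr r"
  then have "p \<in> {1,-1}" "q \<in> {1,-1}" "r \<in> {1,-1}" unfolding dou_carrier_def C2_def by auto
  then show ?thesis using pm3 \<open>x = Inr p\<close> \<open>y = Inr q\<close> \<open>z = Inr r\<close> by auto
qed (insert min3, auto simp: min_def)

lemma f2_tern: "\<forall>x\<in>X2 n. \<forall>y\<in>X2 n. \<forall>z\<in>X2 n. f2 x (f2 y z) \<in> {x,y,z}"
  using f2_tern1 by blast

lemma f2_cube: "\<forall>x\<in>X2 n. f2 x (f2 x x) = x"
proof
  fix x assume x: "x \<in> X2 n"
  show "f2 x (f2 x x) = x"
  proof (cases x)
    case (Inr p)
    then have "p \<in> {1,-1}" using x unfolding dou_carrier_def C2_def by auto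
    then show ?thesis using Inr by auto
  qed simp
qed

lemma part1: "finite (filters (Ln n)) \<and> semilattice_on (filters (Ln n)) (fmul (Ln n) min)"
proof -
  have fin: "finite (Ln n)" unfolding Ln_def by simp
  have cl: "\<forall>x\<in>Ln n. \<forall>y\<in>Ln n. min x y \<in> Ln n" unfolding Ln_def by (auto simp: min_def)
  have as: "\<forall>x y z. min (min x y) z = min x (min (y::nat) z)" by (simp add: min.assoc)
  have co: "\<forall>x y. min x y = min y (x::nat)" by (simp add: min.commute)
  have mi: "\<forall>x y. min x y \<in> {x, y::nat}" by (simp add: min_def)
  have id: "\<forall>x. min x x = (x::nat)" by simp
  have "semigroup_on (filters (Ln n)) (fmul (Ln n) min)" by (rule gen_sg[OF fin cl as])
  moreover have "commutative_on (filters (Ln n)) (fmul (Ln n) min)" by (rule gen_comm[OF fin co])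
  moreover have "\<forall>F\<in>filters (Ln n). fmul (Ln n) min F F = F" by (rule gen_idem[OF fin mi id])
  ultimately show ?thesis unfolding semilattice_on_def using gen_finite[OF fin] by blast
qed

definition pi :: "nat \<Rightarrow> nat + int \<Rightarrow> nat" where
  "pi n x = (case x of Inl a \<Rightarrow> a | Inr _ \<Rightarrow> n)"
definition Cp :: "(nat + int) set \<Rightarrow> int set" where "Cp B = {b. Inr b \<in> B}"
abbreviation "L1 n \<equiv> Ln (Suc n)"
abbreviation "II n \<equiv> {F \<in> filters (L1 n). Ln n \<in> F}"
definition g :: "nat \<Rightarrow> (nat + int) set \<Rightarrow> nat set set + (nat set set \<times> int set set)" where
  "g n B = (if Cp B = {} then Inl (pf (L1 n) (pi n ` B)) else Inr (pf (L1 n) (pi n ` B), pf C2 (Cp B)))"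

lemma mem_X2: "x \<in> X2 n \<Longrightarrow> (\<exists>a. x = Inl a \<and> a < n) \<or> (\<exists>b. x = Inr b \<and> b \<in> C2)"
  unfolding dou_carrier_def Ln_def by auto

lemma pi_hom: assumes x: "x \<in> X2 n" and y: "y \<in> X2 n" shows "pi n (f2 x y) = min (pi n x) (pi n y)"
proof -
  from mem_X2[OF x] mem_X2[OF y] show ?thesis
  proof (elim disjE exE conjE)
    fix a b assume "x = Inl a" "a < n" "y = Inl b" "b < n" then show ?thesis by (simp add: pi_def)
  next
    fix a b assume "x = Inl a" "a < n" "y = Inr b" then show ?thesis by (simp add: pi_def)
  next
    fix a b assume "x = Inr a" "y = Inl b" "b < n" then show ?thesis by (simp add: pi_def)
  next
    fix a b assume "x = Inr a" "y = Inr b" then show ?thesis by (simp add: pi_def)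
  qed
qed

lemma pi_img: assumes "B \<subseteq> X2 n" "C \<subseteq> X2 n"
  shows "pi n ` setmul f2 B C = setmul min (pi n ` B) (pi n ` C)"
proof -
  have "pi n ` setmul f2 B C = (\<Union>a\<in>B. (\<lambda>b. pi n (f2 a b)) ` C)"
    unfolding setmul_def by (simp add: image_UN image_image)
  also have "\<dots> = (\<Union>a\<in>B. (\<lambda>b. min (pi n a) (pi n b)) ` C)"
    by (intro SUP_cong image_cong refl) (simp add: pi_hom subsetD[OF assms(1)] subsetD[OF assms(2)])
  also have "\<dots> = setmul min (pi n ` B) (pi n ` C)"
    unfolding setmul_def by (simp add: image_image)
  finally show ?thesis .
qed

lemma f2_Inr: "f2 x y = Inr b \<longleftrightarrow> (\<exists>p q. x = Inr p \<and> y = Inr q \<and> b = p * q)"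
  by (cases x; cases y) auto

lemma Cp_mul: "Cp (setmul f2 B C) = setmul (*) (Cp B) (Cp C)"
proof
  show "Cp (setmul f2 B C) \<subseteq> setmul (*) (Cp B) (Cp C)"
  proof
    fix b assume "b \<in> Cp (setmul f2 B C)"
    then have "Inr b \<in> setmul f2 B C" unfolding Cp_def by simp
    then obtain x y where xy: "x \<in> B" "y \<in> C" "Inr b = f2 x y" unfolding setmul_def by blast
    then obtain p q where pq: "x = Inr p" "y = Inr q" "b = p * q" using f2_Inr[of x y b] by metis
    have "p \<in> Cp B" "q \<in> Cp C" using xy pq unfolding Cp_def by simp_all
    then show "b \<in> setmul (*) (Cp B) (Cp C)" unfolding setmul_def using pq(3) by blast
  qed
  show "setmul (*) (Cp B) (Cp C) \<subseteq> Cp (setmul f2 B C)"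
  proof
    fix b assume "b \<in> setmul (*) (Cp B) (Cp C)"
    then obtain p q where pq: "p \<in> Cp B" "q \<in> Cp C" "b = p * q" unfolding setmul_def by blast
    have "Inr p \<in> B" "Inr q \<in> C" using pq unfolding Cp_def by simp_all
    moreover have "Inr b = f2 (Inr p) (Inr q)" using pq by simp
    ultimately have "Inr b \<in> setmul f2 B C" unfolding setmul_def by blast
    then show "b \<in> Cp (setmul f2 B C)" unfolding Cp_def by simp
  qed
qed

lemma pi_sub: "B \<subseteq> X2 n \<Longrightarrow> pi n ` B \<subseteq> L1 n"
proof
  fix y assume B: "B \<subseteq> X2 n" and "y \<in> pi n ` B"
  then obtain x where x: "x \<in> B" "y = pi n x" by blast
  from mem_X2[OF subsetD[OF B x(1)]] show "y \<in> L1 n"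
    using x(2) by (auto simp: pi_def Ln_def)
qed

lemma Cp_sub: "B \<subseteq> X2 n \<Longrightarrow> Cp B \<subseteq> C2"
  unfolding dou_carrier_def Cp_def by auto

lemma n_in_pi: assumes B: "B \<subseteq> X2 n" shows "n \<in> pi n ` B \<longleftrightarrow> Cp B \<noteq> {}"
proof
  assume "n \<in> pi n ` B"
  then obtain x where x: "x \<in> B" "n = pi n x" by blast
  from mem_X2[OF subsetD[OF B x(1)]] obtain b where "x = Inr b"
    using x(2) by (auto simp: pi_def)
  then show "Cp B \<noteq> {}" using x(1) unfolding Cp_def by auto
next
  assume "Cp B \<noteq> {}"
  then obtain b where "Inr b \<in> B" unfolding Cp_def by auto
  then show "n \<in> pi n ` B" by (force simp: pi_def)
qed

lemma pf_II: assumes "D \<noteq> {}" "D \<subseteq> L1 n" shows "pf (L1 n) D \<in> II n \<longleftrightarrow> n \<notin> D"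
proof -
  have f: "pf (L1 n) D \<in> filters (L1 n)" by (rule pf_in_filters[OF assms])
  have s: "Ln n \<subseteq> L1 n" unfolding Ln_def by auto
  have "Ln n \<in> pf (L1 n) D \<longleftrightarrow> D \<subseteq> Ln n" using s unfolding pf_def by simp
  also have "\<dots> \<longleftrightarrow> n \<notin> D"
  proof
    assume "D \<subseteq> Ln n" then show "n \<notin> D" unfolding Ln_def by auto
  next
    assume nD: "n \<notin> D"
    show "D \<subseteq> Ln n"
    proof
      fix x assume "x \<in> D"
      then have "x < Suc n" "x \<noteq> n" using assms(2) nD unfolding Ln_def by auto
      then show "x \<in> Ln n" unfolding Ln_def by simp
    qed
  qed
  finally show ?thesis using f by simp
qed

lemma C2_closed: "\<forall>x\<in>C2. \<forall>y\<in>C2. x * y \<in> C2" unfolding C2_def by auto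
lemma L1_closed: "\<forall>x\<in>L1 n. \<forall>y\<in>L1 n. min x y \<in> L1 n" unfolding Ln_def by (auto simp: min_def)

lemma pX_g: "rp_pX (g n B) = pf (L1 n) (pi n ` B)"
  unfolding g_def by auto

lemma g_hom: assumes B: "B \<in> Pn (X2 n)" and C: "C \<in> Pn (X2 n)"
  shows "rp_mul (II n) (fmul (L1 n) min) (fmul C2 (*)) (g n B) (g n C) = g n (setmul f2 B C)"
proof -
  let ?S = "setmul f2 B C"
  have BX: "B \<subseteq> X2 n" "B \<noteq> {}" and CX: "C \<subseteq> X2 n" "C \<noteq> {}" using B C unfolding Pn_def by auto
  have SX: "?S \<subseteq> X2 n" "?S \<noteq> {}" using setmul_sub[OF f2_closed BX(1) CX(1)] setmul_ne[OF BX(2) CX(2)] by auto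
  have c: "fmul (L1 n) min (rp_pX (g n B)) (rp_pX (g n C)) = pf (L1 n) (pi n ` ?S)"
    unfolding pX_g using fmul_pf[OF pi_sub[OF BX(1)] pi_sub[OF CX(1)]] pi_img[OF BX(1) CX(1)] by simp
  have Sne: "pi n ` ?S \<noteq> {}" "pi n ` ?S \<subseteq> L1 n" using SX pi_sub by auto
  show ?thesis
  proof (cases "Cp ?S = {}")
    case True
    hence "pf (L1 n) (pi n ` ?S) \<in> II n" using pf_II[OF Sne] n_in_pi[OF SX(1)] by simp
    then show ?thesis unfolding rp_mul_def Let_def c using True by (simp add: g_def)
  next
    case False
    hence ni: "pf (L1 n) (pi n ` ?S) \<notin> II n" using pf_II[OF Sne] n_in_pi[OF SX(1)] by simp
    have ne: "setmul (*) (Cp B) (Cp C) \<noteq> {}" using Cp_mul[of B C] \<open>Cp ?S \<noteq> {}\<close> by (simp del: Cp_mul)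
    have "Cp B \<noteq> {}" "Cp C \<noteq> {}" using ne unfolding setmul_def by auto
    hence gB: "g n B = Inr (pf (L1 n) (pi n ` B), pf C2 (Cp B))"
      and gC: "g n C = Inr (pf (L1 n) (pi n ` C), pf C2 (Cp C))" unfolding g_def by auto
    have "fmul C2 (*) (pf C2 (Cp B)) (pf C2 (Cp C)) = pf C2 (Cp ?S)"
      using fmul_pf[OF Cp_sub[OF BX(1)] Cp_sub[OF CX(1)]] Cp_mul by simp
    note e = this
    have "rp_mul (II n) (fmul (L1 n) min) (fmul C2 (*)) (g n B) (g n C)
        = Inr (pf (L1 n) (pi n ` ?S), fmul C2 (*) (pf C2 (Cp B)) (pf C2 (Cp C)))"
      unfolding rp_mul_def Let_def c using ni by (simp add: gB gC)
    also have "\<dots> = g n ?S" unfolding e using False by (simp add: g_def)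
    finally show ?thesis .
  qed
qed


lemma determ: assumes "B \<subseteq> X2 n" "C \<subseteq> X2 n" "pi n ` B = pi n ` C" "Cp B = Cp C"
  shows "B \<subseteq> C"
proof
  fix x assume x: "x \<in> B"
  show "x \<in> C"
  proof (cases x)
    case (Inl a)
    hence "a < n" using x assms(1) unfolding dou_carrier_def Ln_def by auto
    have "pi n x \<in> pi n ` B" using x by (rule imageI)
    then have "a \<in> pi n ` C" using assms(3) Inl by (simp add: pi_def)
    then obtain y where "y \<in> C" "pi n y = a" by auto
    then show ?thesis using Inl \<open>a < n\<close> by (cases y) (auto simp: pi_def)
  next
    case (Inr b)
    then show ?thesis using x assms(4) unfolding Cp_def by auto
  qed
qed

lemma g_inj: "inj_on (g n) (Pn (X2 n))"
proof (rule inj_onI)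
  fix B C assume B: "B \<in> Pn (X2 n)" and C: "C \<in> Pn (X2 n)" and e: "g n B = g n C"
  have BX: "B \<subseteq> X2 n" and CX: "C \<subseteq> X2 n" using B C unfolding Pn_def by auto
  have p: "pi n ` B = pi n ` C"
    using pf_inj[OF pi_sub[OF BX] pi_sub[OF CX]] arg_cong[OF e, of rp_pX] unfolding pX_g by simp
  have "Cp B = Cp C"
  proof (cases "Cp B = {}")
    case True
    then show ?thesis using e unfolding g_def by (auto split: if_splits)
  next
    case False
    then have "Cp C \<noteq> {}" using e unfolding g_def by (auto split: if_splits)
    then show ?thesis using e False pf_inj[OF Cp_sub[OF BX] Cp_sub[OF CX]] unfolding g_def by auto
  qed
  then show "B = C" using determ[OF BX CX p] determ[OF CX BX p[symmetric]] by auto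
qed

lemma finite_L1: "finite (L1 n)" unfolding Ln_def by simp
lemma finite_C2: "finite C2" unfolding C2_def by simp

lemma rp_Inl: "Inl F \<in> rp_carrier X I Y \<longleftrightarrow> F \<in> I"
  unfolding rp_carrier_def by blast
lemma rp_Inr: "Inr (F, H) \<in> rp_carrier X I Y \<longleftrightarrow> F \<in> X \<and> F \<notin> I \<and> H \<in> Y"
  unfolding rp_carrier_def by blast

lemma g_img: "g n ` Pn (X2 n) = rp_carrier (filters (L1 n)) (II n) (filters C2)"
proof
  show "g n ` Pn (X2 n) \<subseteq> rp_carrier (filters (L1 n)) (II n) (filters C2)"
  proof
    fix y assume "y \<in> g n ` Pn (X2 n)"
    then obtain B where B0: "B \<in> Pn (X2 n)" "y = g n B" by blast
    then have B: "B \<subseteq> X2 n" "B \<noteq> {}" unfolding Pn_def by simp_all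
    have ps: "pi n ` B \<noteq> {}" "pi n ` B \<subseteq> L1 n" using B(2) pi_sub[OF B(1)] by simp_all
    show "y \<in> rp_carrier (filters (L1 n)) (II n) (filters C2)"
    proof (cases "Cp B = {}")
      case True
      then have "pf (L1 n) (pi n ` B) \<in> II n" using pf_II[OF ps] n_in_pi[OF B(1)] by simp
      moreover have "y = Inl (pf (L1 n) (pi n ` B))" unfolding B0(2) g_def using True by simp
      ultimately show ?thesis by (simp add: rp_Inl)
    next
      case False
      then have "pf (L1 n) (pi n ` B) \<notin> II n" using pf_II[OF ps] n_in_pi[OF B(1)] by simp
      moreover have "pf (L1 n) (pi n ` B) \<in> filters (L1 n)" by (rule pf_in_filters[OF ps])
      moreover have "pf C2 (Cp B) \<in> filters C2" by (rule pf_in_filters[OF False Cp_sub[OF B(1)]])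
      moreover have "y = Inr (pf (L1 n) (pi n ` B), pf C2 (Cp B))" unfolding B0(2) g_def using False by simp
      ultimately show ?thesis by (simp only: rp_Inr simp_thms)
    qed
  qed
  show "rp_carrier (filters (L1 n)) (II n) (filters C2) \<subseteq> g n ` Pn (X2 n)"
  proof
    fix y assume y: "y \<in> rp_carrier (filters (L1 n)) (II n) (filters C2)"
    show "y \<in> g n ` Pn (X2 n)"
    proof (cases y)
      case (Inl F)
      then have F: "F \<in> II n" using y by (simp add: rp_Inl)
      have F1: "F \<in> filters (L1 n)" using F by simp
      obtain D where D: "D \<noteq> {}" "D \<subseteq> L1 n" "F = pf (L1 n) D"
        using filters_obtain[OF finite_L1 F1] .
      have nD: "n \<notin> D" using pf_II[OF D(1,2)] F unfolding D(3) by simp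
      define B where "B = (Inl ` D :: (nat + int) set)"
      have DL: "D \<subseteq> Ln n"
      proof
        fix x assume "x \<in> D"
        then have "x < Suc n" "x \<noteq> n" using D(2) nD unfolding Ln_def by auto
        then show "x \<in> Ln n" unfolding Ln_def by simp
      qed
      have "B \<subseteq> X2 n" using DL unfolding dou_carrier_def B_def by blast
      moreover have "B \<noteq> {}" using D(1) unfolding B_def by simp
      ultimately have BP: "B \<in> Pn (X2 n)" unfolding Pn_def by simp
      have c: "Cp B = {}" unfolding Cp_def B_def by blast
      have "pi n ` B = D" unfolding B_def by (simp add: image_image pi_def)
      then have "g n B = y" unfolding g_def Inl D(3) using c by simp
      then show ?thesis using BP by (rule image_eqI[OF sym])
    next
      case (Inr p)
      obtain F H where p: "p = (F, H)" by (cases p)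
      have FH: "F \<in> filters (L1 n) \<and> F \<notin> II n \<and> H \<in> filters C2"
        using y unfolding Inr p by (simp add: rp_Inr)
      then have F: "F \<in> filters (L1 n)" "F \<notin> II n" and H: "H \<in> filters C2" by simp_all
      obtain D where D: "D \<noteq> {}" "D \<subseteq> L1 n" "F = pf (L1 n) D"
        using filters_obtain[OF finite_L1 F(1)] .
      obtain E where E: "E \<noteq> {}" "E \<subseteq> C2" "H = pf C2 E"
        using filters_obtain[OF finite_C2 H] .
      have nD: "n \<in> D" using pf_II[OF D(1,2)] F(2) unfolding D(3) by simp
      define B where "B = (Inl ` (D - {n}) \<union> Inr ` E :: (nat + int) set)"
      have DL: "D - {n} \<subseteq> Ln n"
      proof
        fix x assume "x \<in> D - {n}"
        then have "x < Suc n" "x \<noteq> n" using D(2) unfolding Ln_def by auto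
        then show "x \<in> Ln n" unfolding Ln_def by simp
      qed
      have "B \<subseteq> X2 n" using DL E(2) unfolding dou_carrier_def B_def by blast
      moreover have "B \<noteq> {}" using E(1) unfolding B_def by simp
      ultimately have BP: "B \<in> Pn (X2 n)" unfolding Pn_def by simp
      have c: "Cp B = E" unfolding Cp_def B_def by blast
      have "pi n ` B = (D - {n}) \<union> (\<lambda>_. n) ` E" unfolding B_def by (simp add: image_Un image_image pi_def)
      also have "\<dots> = D" using E(1) nD by auto
      finally have pB: "pi n ` B = D" .
      have "g n B = y" unfolding g_def Inr p D(3) E(3) pB c using E(1) by simp
      then show ?thesis using BP by (rule image_eqI[OF sym])
    qed
  qed
qed

lemma bij_Inter: assumes "finite X" shows "bij_betw Inter (filters X) (Pn X)"
proof (rule bij_betw_byWitness[where f'="pf X"])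
  show "\<forall>a\<in>filters X. pf X (\<Inter> a) = a"
  proof
    fix a assume "a \<in> filters X"
    from filters_pf[OF assms this] have "a = pf X (\<Inter> a)" by (rule conjunct2[THEN conjunct2])
    then show "pf X (\<Inter> a) = a" by (rule sym)
  qed
  show "\<forall>a'\<in>Pn X. \<Inter> (pf X a') = a'"
  proof
    fix a assume "a \<in> Pn X"
    then have "a \<subseteq> X" unfolding Pn_def by simp
    then show "\<Inter> (pf X a) = a" by (rule Inter_pf)
  qed
  show "Inter ` filters X \<subseteq> Pn X"
  proof
    fix y assume "y \<in> Inter ` filters X"
    then obtain a where a: "a \<in> filters X" "y = \<Inter> a" by blast
    have h: "\<Inter> a \<noteq> {} \<and> \<Inter> a \<subseteq> X \<and> a = pf X (\<Inter> a)" by (rule filters_pf[OF assms a(1)])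
    have "\<Inter> a \<noteq> {}" "\<Inter> a \<subseteq> X" using h[THEN conjunct1] h[THEN conjunct2, THEN conjunct1] by simp_all
    then show "y \<in> Pn X" unfolding Pn_def a(2) by simp
  qed
  show "pf X ` Pn X \<subseteq> filters X"
  proof
    fix y assume "y \<in> pf X ` Pn X"
    then obtain a where a: "a \<in> Pn X" "y = pf X a" by blast
    then have "a \<noteq> {}" "a \<subseteq> X" unfolding Pn_def by simp_all
    then show "y \<in> filters X" unfolding a(2) by (rule pf_in_filters)
  qed
qed

lemma part2_iso: "semigroup_iso (filters (X2 n)) (fmul (X2 n) f2)
           (rp_carrier (filters (L1 n)) (II n) (filters C2))
           (rp_mul (II n) (fmul (L1 n) min) (fmul C2 (*)))"
  unfolding semigroup_iso_def
proof (intro exI conjI ballI)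
  show "bij_betw (g n \<circ> Inter) (filters (X2 n)) (rp_carrier (filters (L1 n)) (II n) (filters C2))"
    using bij_betw_trans[OF bij_Inter[OF X2_finite] bij_betw_imageI[OF g_inj g_img]] .
  fix F G assume F: "F \<in> filters (X2 n)" and G: "G \<in> filters (X2 n)"
  obtain B where B: "B \<noteq> {}" "B \<subseteq> X2 n" "F = pf (X2 n) B" using filters_obtain[OF X2_finite F] .
  obtain C where C: "C \<noteq> {}" "C \<subseteq> X2 n" "G = pf (X2 n) C" using filters_obtain[OF X2_finite G] .
  have m: "fmul (X2 n) f2 F G = pf (X2 n) (setmul f2 B C)" using fmul_pf B C by simp
  have S: "setmul f2 B C \<subseteq> X2 n" using setmul_sub[OF f2_closed B(2) C(2)] .
  show "(g n \<circ> Inter) (fmul (X2 n) f2 F G) = rp_mul (II n) (fmul (L1 n) min) (fmul C2 (*)) ((g n \<circ> Inter) F) ((g n \<circ> Inter) G)"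
  proof -
    have 1: "(g n \<circ> Inter) (fmul (X2 n) f2 F G) = g n (setmul f2 B C)" unfolding comp_def m Inter_pf[OF S] ..
    have 2: "(g n \<circ> Inter) F = g n B" unfolding comp_def B(3) Inter_pf[OF B(2)] ..
    have 3: "(g n \<circ> Inter) G = g n C" unfolding comp_def C(3) Inter_pf[OF C(2)] ..
    have "B \<in> Pn (X2 n)" "C \<in> Pn (X2 n)" using B C unfolding Pn_def by simp_all
    then show ?thesis unfolding 1 2 3 using g_hom by simp
  qed
qed



theorem proposition4p8:
  fixes n :: nat
  shows "(finite (filters (Ln n)) \<and> semilattice_on (filters (Ln n)) (fmul (Ln n) min))
       \<and> (semigroup_on (filters (dou_carrier (Ln n) C2)) (fmul (dou_carrier (Ln n) C2) (dou_mul min (*)))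
       \<and> commutative_on (filters (dou_carrier (Ln n) C2)) (fmul (dou_carrier (Ln n) C2) (dou_mul min (*)))
       \<and> boolean_on (filters (dou_carrier (Ln n) C2)) (fmul (dou_carrier (Ln n) C2) (dou_mul min (*)))
       \<and> semigroup_iso
           (filters (dou_carrier (Ln n) C2)) (fmul (dou_carrier (Ln n) C2) (dou_mul min (*)))
           (rp_carrier (filters (Ln (Suc n))) {F \<in> filters (Ln (Suc n)). Ln n \<in> F} (filters C2))
           (rp_mul {F \<in> filters (Ln (Suc n)). Ln n \<in> F} (fmul (Ln (Suc n)) min) (fmul C2 (*))))"
proof -
  have 1: "finite (filters (Ln n)) \<and> semilattice_on (filters (Ln n)) (fmul (Ln n) min)" by (rule part1)
  have 2: "semigroup_on (filters (X2 n)) (fmul (X2 n) f2)" by (rule gen_sg[OF X2_finite f2_closed f2_assoc])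
  have 3: "commutative_on (filters (X2 n)) (fmul (X2 n) f2)" by (rule gen_comm[OF X2_finite f2_comm])
  have 4: "boolean_on (filters (X2 n)) (fmul (X2 n) f2)" by (rule gen_cube[OF X2_finite f2_closed f2_tern f2_cube])
  have 5: "semigroup_iso (filters (X2 n)) (fmul (X2 n) f2)
           (rp_carrier (filters (L1 n)) (II n) (filters C2))
           (rp_mul (II n) (fmul (L1 n) min) (fmul C2 (*)))" by (rule part2_iso)
  show ?thesis using 1 2 3 4 5 by (simp only: 1 2 3 4 5)
qed

end
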